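(* Consider the Weakener algorithm (described in the context) for $n \ge 3$ processes $p_0,\dots,p_{n-1}$. If the registers $R_1[j]$, $R_2[j]$, $C_1[j]$ ($j \ge 0$) used by the algorithm are linearizable but not strongly linearizable, then a strong adversary can construct a run of the algorithm in which all the processes execute infinitely many rounds, and therefore never reach a return statement.
   Context: Model: an asynchronous shared-memory system of $n\ge 3$ processes $p_0,\dots,p_{n-1}$ that may fail by crashing. A process is correct if it takes infinitely many steps. After returning from the algorithm, a process takes no-op steps forever. A strong adversary is a scheduler that sees the entire history so far, including the results of all coin flips made so far, and chooses adaptively which process takes the next step. A "linearizable [strongly linearizable] register" means an implemented register whose implementation is linearizable [strongly linearizable]. Linearizability: every operation appears to take effect instantaneously at some point between its invocation and its response, i.e., each history has a linearization (a sequential history consistent with the real-time order of non-overlapping operations and with the sequential specification). Strong linearizability: a set of histories $\mathcal{H}$ is strongly linearizable if there is a function $f$ from the prefix-closure of $\mathcal{H}$ to sequential histories such that (L) for every $H$ in the prefix-closure, $f(H)$ is a linearization of $H$, and (P) whenever $G$ is a prefix of $H$ (both in the prefix-closure), $f(G)$ is a prefix of $f(H)$. Weakener algorithm. Shared registers, for each $j = 0,1,2,\dots$: $R_1[j]$, a multi-writer multi-reader register initialized to $\bot$; $C_1[j]$, a register written only by $p_0$, initialized to $-1$; $R_2[j]$, a register initialized to $\textsc{false}$. Code of $p_i$ for $i \in \{0,1\}$: for rounds $j=0,1,2,\dots$: (Phase 1) write $i$ into $R_1[j]$; if $i=0$, flip a fair coin (outcome in $\{0,1\}$) and write the outcome into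 $C_1[j]$; (Phase 2) read $R_2[j]$ into local variable $v_1$; if $v_1 = \textsc{false}$, exit the for loop. After the loop: return. Code of $p_i$ for $i \in \{2,\dots,n-1\}$: for rounds $j=0,1,2,\dots$: (Phase 1) read $R_1[j]$ into $u_1$; read $R_1[j]$ into $u_2$; read $C_1[j]$ into $c_1$; if $u_1 \ne c_1$ or $u_2 \ne 1-c_1$, exit the for loop; (Phase 2) write $\textsc{true}$ into $R_2[j]$. After the loop: return. *)

theory Defs
  imports Main
begin

text \<open>Register values: bottom, integers (R1, C1) and booleans (R2).\<close>
datatype val = Bot | VI int | VB bool

datatype reg = R1 nat | C1 nat | R2 nat

fun init_val :: "reg \<Rightarrow> val" where
  "init_val (R1 j) = Bot"
| "init_val (C1 j) = VI (-1)"
| "init_val (R2 j) = VB False"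

datatype rop = Rd | Wr val

text \<open>Events of a run: invocation / response of a register operation by a process,
  a coin flip (with its outcome) by a process, and a no-op step (after return).\<close>
datatype event = Inv nat reg rop | Resp nat reg val | Flip nat bool | NoOp nat

fun proc :: "event \<Rightarrow> nat" where
  "proc (Inv p r op) = p" | "proc (Resp p r v) = p" | "proc (Flip p b) = p" | "proc (NoOp p) = p"

fun is_flip :: "event \<Rightarrow> bool" where
  "is_flip (Flip p b) = True" | "is_flip _ = False"

fun is_inv_on :: "reg \<Rightarrow> event \<Rightarrow> bool" where
  "is_inv_on r (Inv p r' op) = (r' = r)" | "is_inv_on r _ = False"

fun is_read_inv :: "event \<Rightarrow> bool" where
  "is_read_inv (Inv p r Rd) = True" | "is_read_inv _ = False"

fun resp_val :: "event \<Rightarrow> val" where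
  "resp_val (Resp p r v) = v" | "resp_val _ = Bot"

definition matches :: "event list \<Rightarrow> nat \<Rightarrow> nat \<Rightarrow> bool" where
  "matches h i j \<longleftrightarrow> i < j \<and> j < length h \<and>
     (\<exists>p r op v. h!i = Inv p r op \<and> h!j = Resp p r v \<and>
        (\<forall>k. i < k \<and> k < j \<longrightarrow> proc (h!k) \<noteq> p))"

definition cur_val :: "event list \<Rightarrow> val \<Rightarrow> nat list \<Rightarrow> val" where
  "cur_val h v0 xs = foldl (\<lambda>v i. case h!i of Inv p r (Wr w) \<Rightarrow> w | _ \<Rightarrow> v) v0 xs"

text \<open>Linearizability of the sub-history of register r (initial value v0) in h:
  there is a sequential order L of a set of operations (identified by their
  invocation index) containing all completed operations (pending operations may
  be completed or dropped) that respects real-time order and in which every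
  completed read returns the value of the latest preceding write (or v0).\<close>
definition linearizable_reg :: "event list \<Rightarrow> reg \<Rightarrow> val \<Rightarrow> bool" where
  "linearizable_reg h r v0 \<longleftrightarrow> (\<exists>L.
     distinct L \<and>
     (\<forall>i\<in>set L. i < length h \<and> is_inv_on r (h!i)) \<and>
     (\<forall>i j. matches h i j \<and> is_inv_on r (h!i) \<longrightarrow> i \<in> set L) \<and>
     (\<forall>x < length L. \<forall>y < length L. (\<exists>j. matches h (L!x) j \<and> j < L!y) \<longrightarrow> x < y) \<and>
     (\<forall>k < length L. \<forall>j. matches h (L!k) j \<and> is_read_inv (h!(L!k)) \<longrightarrow>
         resp_val (h!j) = cur_val h v0 (take k L)))"

text \<open>Program counters. P* for p0,p1; Q* for p2..p(n-1); *w = awaiting response.\<close>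
datatype pc = PW1 | PW1w | PFlip | PWC | PWCw | PR2 | PR2w
  | QR1a | QR1aw | QR1b | QR1bw | QC | QCw | QW2 | QW2w | Done

record lstate =
  rnd :: nat
  pcv :: pc
  u1 :: val
  u2 :: val
  cv :: val

fun one_minus :: "val \<Rightarrow> val" where
  "one_minus (VI k) = VI (1 - k)" | "one_minus _ = VB True"

definition init_state :: "nat \<Rightarrow> lstate" where
  "init_state p = \<lparr>rnd = 0, pcv = (if p < 2 then PW1 else QR1a), u1 = Bot, u2 = Bot, cv = Bot\<rparr>"

text \<open>One step of process p in local state s. v is the value returned if the step is a
  read response (chosen by the adversary, constrained by linearizability);
  b is the outcome of the coin if the step is a coin flip.\<close>
definition pstep :: "nat \<Rightarrow> lstate \<Rightarrow> val \<Rightarrow> bool \<Rightarrow> event \<times> lstate" where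
  "pstep p s v b = (let j = rnd s in case pcv s of
     PW1 \<Rightarrow> (Inv p (R1 j) (Wr (VI (int p))), s\<lparr>pcv := PW1w\<rparr>)
   | PW1w \<Rightarrow> (Resp p (R1 j) Bot, s\<lparr>pcv := (if p = 0 then PFlip else PR2)\<rparr>)
   | PFlip \<Rightarrow> (Flip p b, s\<lparr>pcv := PWC, cv := VI (if b then 1 else 0)\<rparr>)
   | PWC \<Rightarrow> (Inv p (C1 j) (Wr (cv s)), s\<lparr>pcv := PWCw\<rparr>)
   | PWCw \<Rightarrow> (Resp p (C1 j) Bot, s\<lparr>pcv := PR2\<rparr>)
   | PR2 \<Rightarrow> (Inv p (R2 j) Rd, s\<lparr>pcv := PR2w\<rparr>)
   | PR2w \<Rightarrow> (Resp p (R2 j) v,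
        if v = VB False then s\<lparr>pcv := Done\<rparr> else s\<lparr>rnd := j + 1, pcv := PW1\<rparr>)
   | QR1a \<Rightarrow> (Inv p (R1 j) Rd, s\<lparr>pcv := QR1aw\<rparr>)
   | QR1aw \<Rightarrow> (Resp p (R1 j) v, s\<lparr>u1 := v, pcv := QR1b\<rparr>)
   | QR1b \<Rightarrow> (Inv p (R1 j) Rd, s\<lparr>pcv := QR1bw\<rparr>)
   | QR1bw \<Rightarrow> (Resp p (R1 j) v, s\<lparr>u2 := v, pcv := QC\<rparr>)
   | QC \<Rightarrow> (Inv p (C1 j) Rd, s\<lparr>pcv := QCw\<rparr>)
   | QCw \<Rightarrow> (Resp p (C1 j) v,
        if u1 s \<noteq> v \<or> u2 s \<noteq> one_minus v then s\<lparr>cv := v, pcv := Done\<rparr>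
        else s\<lparr>cv := v, pcv := QW2\<rparr>)
   | QW2 \<Rightarrow> (Inv p (R2 j) (Wr (VB True)), s\<lparr>pcv := QW2w\<rparr>)
   | QW2w \<Rightarrow> (Resp p (R2 j) Bot, s\<lparr>rnd := j + 1, pcv := QR1a\<rparr>)
   | Done \<Rightarrow> (NoOp p, s))"

text \<open>A strong adversary is a function from the history so far (including all coin
  outcomes) to the next process to step and the value to return if that step is a
  read response. cs m is the outcome of the m-th coin flip of the run.\<close>
type_synonym adversary = "event list \<Rightarrow> nat \<times> val"

fun run :: "adversary \<Rightarrow> (nat \<Rightarrow> bool) \<Rightarrow> nat \<Rightarrow> (nat \<Rightarrow> lstate) \<times> event list" where
  "run \<sigma> cs 0 = (init_state, [])"
| "run \<sigma> cs (Suc k) = (let (st, h) = run \<sigma> cs k; (p, v) = \<sigma> h;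
     (e, s') = pstep p (st p) v (cs (length (filter is_flip h)))
   in (st(p := s'), h @ [e]))"

end

theory Submission
  imports Defs
begin


definition BB :: "nat \<Rightarrow> nat" where "BB m = 8*m+11"
definition cI :: "bool \<Rightarrow> int" where "cI c = (if c then 1 else 0)"

definition sched :: "nat \<Rightarrow> nat \<Rightarrow> nat" where
"sched m t = (if t = 0 then 1 else if t = 1 then 0 else if t \<le> m+1 then t else if t \<le> m+5 then 0
   else if t < 8*m+6 then 2 + (t-m-6) div 7 else if t \<le> 8*m+8 then 1 else 0)"

definition ev5 :: "nat \<Rightarrow> bool \<Rightarrow> nat \<Rightarrow> nat \<Rightarrow> event" where
"ev5 j c q s = (if s=0 then Resp q (R1 j) (VI (cI c)) else if s=1 then Inv q (R1 j) Rd
   else if s = 2 then Resp q (R1 j) (VI (1 - cI c)) else if s=3 then Inv q (C1 j) Rd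
   else if s=4 then Resp q (C1 j) (VI (cI c)) else if s=5 then Inv q (R2 j) (Wr (VB True))
   else Resp q (R2 j) Bot)"

definition ev :: "nat \<Rightarrow> nat \<Rightarrow> bool \<Rightarrow> nat \<Rightarrow> event" where
"ev m j c t = (if t = 0 then Inv 1 (R1 j) (Wr (VI 1)) else if t = 1 then Inv 0 (R1 j) (Wr (VI 0))
  else if t \<le> m+1 then Inv t (R1 j) Rd else if t = m+2 then Resp 0 (R1 j) Bot
  else if t = m+3 then Flip 0 c else if t = m+4 then Inv 0 (C1 j) (Wr (VI (cI c)))
  else if t = m+5 then Resp 0 (C1 j) Bot
  else if t < 8*m+6 then ev5 j c (2 + (t-m-6) div 7) ((t-m-6) mod 7)
  else if t = 8*m+6 then Resp 1 (R1 j) Bot else if t = 8*m+7 then Inv 1 (R2 j) Rd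
  else if t = 8*m+8 then Resp 1 (R2 j) (VB True) else if t = 8*m+9 then Inv 0 (R2 j) Rd
  else Resp 0 (R2 j) (VB True))"

lemma sched5: "s < 7 \<Longrightarrow> i < m \<Longrightarrow> sched m (m+6+7*i+s) = i+2"
  unfolding sched_def by auto

lemma ev5': "s < 7 \<Longrightarrow> i < m \<Longrightarrow> ev m j c (m+6+7*i+s) = ev5 j c (i+2) s"
  unfolding ev_def by auto

lemma proc_ev: "t < BB m \<Longrightarrow> proc (ev m j c t) = sched m t"
  unfolding ev_def sched_def ev5_def BB_def by (auto simp: Let_def)

definition PC :: "nat \<Rightarrow> nat \<Rightarrow> nat \<Rightarrow> pc" where
"PC m p t = (if p = 0 then (if t \<le> 1 then PW1 else if t \<le> m+2 then PW1w else if t = m+3 then PFlip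
    else if t = m+4 then PWC else if t = m+5 then PWCw else if t \<le> 8*m+9 then PR2 else PR2w)
  else if p = 1 then (if t = 0 then PW1 else if t \<le> 8*m+6 then PW1w else if t = 8*m+7 then PR2
    else if t = 8*m+8 then PR2w else PW1)
  else (if t \<le> p then QR1a else if t \<le> m+6+7*(p-2) then QR1aw else if t = m+7+7*(p-2) then QR1b
    else if t = m+8+7*(p-2) then QR1bw else if t = m+9+7*(p-2) then QC else if t = m+10+7*(p-2) then QCw
    else if t = m+11+7*(p-2) then QW2 else if t = m+12+7*(p-2) then QW2w else QR1a))"

definition RN :: "nat \<Rightarrow> nat \<Rightarrow> nat \<Rightarrow> nat \<Rightarrow> nat" where
"RN m j p t = (if p = 1 then (if 8*m+9 \<le> t then j+1 else j)
   else if 2 \<le> p then (if m+13+7*(p-2) \<le> t then j+1 else j) else j)"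

definition Pinv :: "nat \<Rightarrow> (nat \<Rightarrow> bool) \<Rightarrow> nat \<Rightarrow> nat \<Rightarrow> nat \<Rightarrow> lstate \<Rightarrow> bool" where
"Pinv m cs j t p s \<longleftrightarrow> rnd s = RN m j p t \<and> pcv s = PC m p t \<and>
   (p = 0 \<and> t = m+4 \<longrightarrow> cv s = VI (cI (cs j))) \<and>
   (2 \<le> p \<and> m+7+7*(p-2) \<le> t \<and> t \<le> m+10+7*(p-2) \<longrightarrow> u1 s = VI (cI (cs j))) \<and>
   (2 \<le> p \<and> m+9+7*(p-2) \<le> t \<and> t \<le> m+10+7*(p-2) \<longrightarrow> u2 s = VI (1 - cI (cs j)))"

definition vexp :: "nat \<Rightarrow> bool \<Rightarrow> nat \<Rightarrow> val" where
"vexp m c t = (if m+6 \<le> t \<and> t < 8*m+6 then (if (t-m-6) mod 7 = 2 then VI (1 - cI c)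
    else if (t-m-6) mod 7 = 0 \<or> (t-m-6) mod 7 = 4 then VI (cI c) else VB True) else VB True)"

lemma frame_q:
  assumes "2 \<le> p" "p < m+2" "p \<noteq> sched m t" "Suc t < BB m"
  shows "t \<noteq> p \<and> (t < m+6+7*(p-2) \<or> m+12+7*(p-2) < t)"
  using assms unfolding sched_def BB_def by (auto split: if_splits; presburger)

lemma frame:
  assumes "Pinv m cs j t p s" "p < m+2" "p \<noteq> sched m t" "Suc t < BB m"
  shows "Pinv m cs j (Suc t) p s"
proof -
  consider "p = 0" | "p = 1" | "2 \<le> p" by linarith
  then show ?thesis
  proof cases
    case 1
    then show ?thesis using assms unfolding Pinv_def PC_def RN_def sched_def BB_def
      by (auto split: if_splits)
  next
    case 2
    then show ?thesis using assms unfolding Pinv_def PC_def RN_def sched_def BB_def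
      by (auto split: if_splits)
  next
    case 3
    have "t \<noteq> p \<and> (t < m+6+7*(p-2) \<or> m+12+7*(p-2) < t)" using frame_q 3 assms by blast
    then show ?thesis using assms 3 unfolding Pinv_def PC_def RN_def
      by (auto split: if_splits)
  qed
qed

lemma wrap:
  assumes "Pinv m cs j t p s" "p < m+2" "p \<noteq> 0" "Suc t = BB m"
  shows "Pinv m cs (Suc j) 0 p s"
  using assms unfolding Pinv_def PC_def RN_def BB_def by (auto split: if_splits)

lemma stepper:
  assumes P: "Pinv m cs j t p s" and pd: "p = sched m t" and tB: "t < BB m" and m1: "1 \<le> m"
    and bb: "t = m+3 \<Longrightarrow> b = cs j" and vv: "v = vexp m (cs j) t"
  shows "fst (pstep p s v b) = ev m j (cs j) t \<and>
     (if Suc t < BB m then Pinv m cs j (Suc t) p (snd (pstep p s v b))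
      else Pinv m cs (Suc j) 0 p (snd (pstep p s v b)))"
proof -
  have c4: "d < 4 \<Longrightarrow> d = 0 \<or> d = 1 \<or> d = 2 \<or> d = 3" for d :: nat by auto
  have c5: "d < 5 \<Longrightarrow> d = 0 \<or> d = 1 \<or> d = 2 \<or> d = 3 \<or> d = 4" for d :: nat by auto
  consider (A) "t \<le> m+1" | (B) d where "d < 4" "t = m+2+d" | (C) "m+6 \<le> t \<and> t < 8*m+6"
     | (D) d where "d < 5" "t = 8*m+6+d"
  proof -
    have "t \<le> m+1 \<or> (m+2 \<le> t \<and> t \<le> m+5) \<or> (m+6 \<le> t \<and> t < 8*m+6) \<or> (8*m+6 \<le> t \<and> t < 8*m+11)"
      using tB unfolding BB_def by linarith
    moreover have "m+2 \<le> t \<Longrightarrow> t \<le> m+5 \<Longrightarrow> t = m+2+(t-(m+2)) \<and> t-(m+2) < 4" by linarith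
    moreover have "8*m+6 \<le> t \<Longrightarrow> t < 8*m+11 \<Longrightarrow> t = 8*m+6+(t-(8*m+6)) \<and> t-(8*m+6) < 5" by linarith
    ultimately show thesis using that by blast
  qed
  then show ?thesis
  proof cases
    case A
    then consider "t = 0" | "t = 1" | "2 \<le> t \<and> t \<le> m+1" by linarith
    then show ?thesis
    proof cases
      case 1 then show ?thesis using P m1 bb vv pd tB by (auto simp: Pinv_def PC_def RN_def sched_def BB_def pstep_def ev_def vexp_def cI_def)
    next
      case 2 then show ?thesis using P m1 bb vv pd tB by (auto simp: Pinv_def PC_def RN_def sched_def BB_def pstep_def ev_def vexp_def cI_def)
    next
      case 3 then show ?thesis using P m1 bb vv pd tB by (auto simp: Pinv_def PC_def RN_def sched_def BB_def pstep_def ev_def vexp_def cI_def)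
    qed
  next
    case B
    then consider "t = m+2" | "t = m+3" | "t = m+4" | "t = m+5" by linarith
    then show ?thesis
    proof cases
      case 1 then show ?thesis using P m1 bb vv pd tB by (auto simp: Pinv_def PC_def RN_def sched_def BB_def pstep_def ev_def vexp_def cI_def)
    next
      case 2 then show ?thesis using P m1 bb vv pd tB by (auto simp: Pinv_def PC_def RN_def sched_def BB_def pstep_def ev_def vexp_def cI_def)
    next
      case 3 then show ?thesis using P m1 bb vv pd tB by (auto simp: Pinv_def PC_def RN_def sched_def BB_def pstep_def ev_def vexp_def cI_def)
    next
      case 4 then show ?thesis using P m1 bb vv pd tB by (auto simp: Pinv_def PC_def RN_def sched_def BB_def pstep_def ev_def vexp_def cI_def)
    qed
  next
    case C
    define i where "i = (t-m-6) div 7"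
    define r where "r = (t-m-6) mod 7"
    have ir: "t = m+6+7*i+r" "r < 7" "i < m" using C unfolding i_def r_def by auto
    have pv: "p = i+2" using pd sched5[OF ir(2,3)] ir(1) by simp
    have evt: "ev m j (cs j) t = ev5 j (cs j) (i+2) r" using ev5'[OF ir(2,3)] ir(1) by simp
    have vt: "v = (if r = 2 then VI (1 - cI (cs j)) else if r = 0 \<or> r = 4 then VI (cI (cs j)) else VB True)"
      using vv C unfolding vexp_def r_def by simp
    have "Suc t < BB m" using ir unfolding BB_def by simp
    note ir = ir this
    from ir(2) consider "r = 0" | "r = 1" | "r = 2" | "r = 3" | "r = 4" | "r = 5" | "r = 6" by linarith
    then show ?thesis
    proof cases
      case 1 then show ?thesis using P m1 pv evt vt ir by (auto simp: Pinv_def PC_def RN_def BB_def pstep_def ev5_def cI_def)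
    next
      case 2 then show ?thesis using P m1 pv evt vt ir by (auto simp: Pinv_def PC_def RN_def BB_def pstep_def ev5_def cI_def)
    next
      case 3 then show ?thesis using P m1 pv evt vt ir by (auto simp: Pinv_def PC_def RN_def BB_def pstep_def ev5_def cI_def)
    next
      case 4 then show ?thesis using P m1 pv evt vt ir by (auto simp: Pinv_def PC_def RN_def BB_def pstep_def ev5_def cI_def)
    next
      case 5 then show ?thesis using P m1 pv evt vt ir by (auto simp: Pinv_def PC_def RN_def BB_def pstep_def ev5_def cI_def)
    next
      case 6 then show ?thesis using P m1 pv evt vt ir by (auto simp: Pinv_def PC_def RN_def BB_def pstep_def ev5_def cI_def)
    next
      case 7 then show ?thesis using P m1 pv evt vt ir by (auto simp: Pinv_def PC_def RN_def BB_def pstep_def ev5_def cI_def)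
    qed
  next
    case D
    then consider "t = 8*m+6" | "t = 8*m+7" | "t = 8*m+8" | "t = 8*m+9" | "t = 8*m+10" by linarith
    then show ?thesis
    proof cases
      case 1 then show ?thesis using P m1 bb vv pd tB by (auto simp: Pinv_def PC_def RN_def sched_def BB_def pstep_def ev_def vexp_def cI_def)
    next
      case 2 then show ?thesis using P m1 bb vv pd tB by (auto simp: Pinv_def PC_def RN_def sched_def BB_def pstep_def ev_def vexp_def cI_def)
    next
      case 3 then show ?thesis using P m1 bb vv pd tB by (auto simp: Pinv_def PC_def RN_def sched_def BB_def pstep_def ev_def vexp_def cI_def)
    next
      case 4 then show ?thesis using P m1 bb vv pd tB by (auto simp: Pinv_def PC_def RN_def sched_def BB_def pstep_def ev_def vexp_def cI_def)
    next
      case 5 then show ?thesis using P m1 bb vv pd tB by (auto simp: Pinv_def PC_def RN_def sched_def BB_def pstep_def ev_def vexp_def cI_def)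
    qed
  qed
qed


definition Hc :: "nat \<Rightarrow> (nat \<Rightarrow> bool) \<Rightarrow> nat \<Rightarrow> event" where
"Hc m cs k = ev m (k div BB m) (cs (k div BB m)) (k mod BB m)"

definition flipv :: "event \<Rightarrow> bool" where
"flipv e = (case e of Flip p b \<Rightarrow> b | _ \<Rightarrow> False)"

definition adv :: "nat \<Rightarrow> adversary" where
"adv m h = (sched m (length h mod BB m),
   vexp m (flipv (h ! ((length h div BB m) * BB m + m + 3))) (length h mod BB m))"

lemma BB_pos: "0 < BB m" unfolding BB_def by simp

lemma is_flip_ev: "t < BB m \<Longrightarrow> is_flip (ev m j c t) \<longleftrightarrow> t = m+3"
  unfolding ev_def ev5_def BB_def by auto

lemma Hc_at: "t < BB m \<Longrightarrow> Hc m cs (j * BB m + t) = ev m j (cs j) t"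
  unfolding Hc_def by simp

lemma flipcount: "length (filter is_flip (map (Hc m cs) [0..<k])) =
   k div BB m + (if m+3 < k mod BB m then 1 else 0)"
proof (induction k)
  case 0
  then show ?case by simp
next
  case (Suc k)
  have B: "0 < BB m" by (rule BB_pos)
  have fl: "is_flip (Hc m cs k) \<longleftrightarrow> k mod BB m = m+3"
    unfolding Hc_def using is_flip_ev[of "k mod BB m" m] B by simp
  show ?case
  proof (cases "Suc (k mod BB m) = BB m")
    case True
    then have "Suc k mod BB m = 0" "Suc k div BB m = Suc (k div BB m)"
      by (simp_all add: mod_Suc div_Suc)
    moreover have "m+3 < k mod BB m" using True unfolding BB_def by simp
    ultimately show ?thesis using Suc fl by simp
  next
    case False
    then have "Suc k mod BB m = Suc (k mod BB m)" "Suc k div BB m = k div BB m"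
      by (simp_all add: mod_Suc div_Suc)
    then show ?thesis using Suc fl by auto
  qed
qed

lemma vexp_indep: "\<not> (m+6 \<le> t \<and> t < 8*m+6) \<Longrightarrow> vexp m c t = vexp m c' t"
  unfolding vexp_def by auto

lemma run_inv:
  assumes m1: "1 \<le> m"
  shows "snd (run (adv m) cs k) = map (Hc m cs) [0..<k] \<and>
    (\<forall>p<m+2. Pinv m cs (k div BB m) (k mod BB m) p (fst (run (adv m) cs k) p))"
proof (induction k)
  case 0
  then show ?case by (auto simp: Pinv_def PC_def RN_def init_state_def)
next
  case (Suc k)
  obtain st h where sh: "run (adv m) cs k = (st, h)" by (cases "run (adv m) cs k")
  define j where "j = k div BB m"
  define t where "t = k mod BB m"
  have B: "0 < BB m" by (rule BB_pos)
  have kjt: "k = j * BB m + t" unfolding j_def t_def by simp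
  have tB: "t < BB m" unfolding t_def using B by simp
  have hh: "h = map (Hc m cs) [0..<k]" using Suc sh by simp
  have PI: "\<forall>p<m+2. Pinv m cs j t p (st p)" using Suc sh unfolding j_def t_def by simp
  define p where "p = sched m t"
  define v where "v = vexp m (flipv (h ! ((length h div BB m) * BB m + m + 3))) (length h mod BB m)"
  define b where "b = cs (length (filter is_flip h))"
  have adv: "adv m h = (p, v)" unfolding adv_def p_def v_def using hh t_def by simp
  have vv: "v = vexp m (cs j) t"
  proof (cases "m+6 \<le> t \<and> t < 8*m+6")
    case True
    have lt: "j * BB m + (m+3) < k" using True kjt by simp
    have "h ! ((length h div BB m) * BB m + m + 3) = Hc m cs (j * BB m + (m+3))"
      using hh lt j_def by (simp add: add.assoc)
    also have "\<dots> = Flip 0 (cs j)" using Hc_at[of "m+3" m cs j] B unfolding BB_def ev_def by simp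
    finally show ?thesis unfolding v_def using hh t_def by (simp add: flipv_def)
  next
    case False
    then show ?thesis unfolding v_def using hh t_def vexp_indep by simp
  qed
  have bb: "t = m+3 \<Longrightarrow> b = cs j" unfolding b_def hh flipcount using j_def t_def by simp
  have pl: "p < m+2" unfolding p_def sched_def using tB unfolding BB_def by (auto; presburger?)
  obtain e s' where es: "pstep p (st p) v b = (e, s')" by (cases "pstep p (st p) v b")
  have step: "e = ev m j (cs j) t \<and>
     (if Suc t < BB m then Pinv m cs j (Suc t) p s' else Pinv m cs (Suc j) 0 p s')"
    using stepper[where m=m and cs=cs and j=j and t=t and p=p and s="st p" and b=b and v=v, OF _ p_def tB m1 bb vv] PI pl es by force
  have run': "run (adv m) cs (Suc k) = (st(p := s'), h @ [e])"
    using sh adv es b_def by simp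
  have e: "e = Hc m cs k" using step kjt tB Hc_at by simp
  show ?case
  proof (cases "Suc t < BB m")
    case True
    then have "Suc k div BB m = j" "Suc k mod BB m = Suc t" unfolding j_def t_def
      by (simp_all add: mod_Suc div_Suc)
    then show ?thesis using run' hh e step True PI frame p_def by auto
  next
    case False
    then have "Suc t = BB m" using tB by simp
    then have d: "Suc k div BB m = Suc j" "Suc k mod BB m = 0" unfolding j_def t_def
      by (simp_all add: mod_Suc div_Suc)
    have p0: "p = 0" unfolding p_def using \<open>Suc t = BB m\<close> unfolding sched_def BB_def by auto
    show ?thesis using run' hh e step False PI wrap[OF _ _ _ \<open>Suc t = BB m\<close>] d p0 by auto
  qed
qed



definition cv' :: "(nat \<Rightarrow> event) \<Rightarrow> val \<Rightarrow> nat list \<Rightarrow> val" where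
"cv' H v0 xs = foldl (\<lambda>v i. case H i of Inv p r (Wr w) \<Rightarrow> w | _ \<Rightarrow> v) v0 xs"

lemma cur_val_cv': "\<forall>i\<in>set xs. i < k \<Longrightarrow> cur_val (map H [0..<k]) v0 xs = cv' H v0 xs"
  unfolding cur_val_def cv'_def
proof (induction xs arbitrary: v0)
  case Nil
  then show ?case by simp
next
  case (Cons a xs)
  then show ?case by simp
qed

lemma lin_generic:
  fixes H :: "nat \<Rightarrow> event" and F :: "nat list" and ri :: "nat \<Rightarrow> nat"
  assumes dF: "distinct F"
    and invF: "\<forall>i\<in>set F. is_inv_on r (H i)"
    and cF: "\<forall>i. is_inv_on r (H i) \<longrightarrow> i \<in> set F"
    and sF: "sorted_wrt (\<lambda>u w. u < ri w) F"
    and rF: "\<forall>w\<in>set F. w < ri w"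
    and mF: "\<forall>a y. a \<in> set F \<longrightarrow> matches (map H [0..<k]) a y \<longrightarrow> y = ri a"
    and vF: "\<forall>t<length F. is_read_inv (H (F!t)) \<longrightarrow> resp_val (H (ri (F!t))) = cv' H v0 (take t F)"
  shows "linearizable_reg (map H [0..<k]) r v0"
proof -
  define h where "h = map H [0..<k]"
  define L where "L = filter (\<lambda>i. i < k) F"
  have hi: "i < k \<Longrightarrow> h ! i = H i" for i unfolding h_def by simp
  have lh: "length h = k" unfolding h_def by simp
  have c1: "distinct L" unfolding L_def using dF by simp
  have c2: "\<forall>i\<in>set L. i < length h \<and> is_inv_on r (h!i)" unfolding L_def using invF hi lh by auto
  have c3: "\<forall>i j. matches h i j \<and> is_inv_on r (h!i) \<longrightarrow> i \<in> set L"
  proof (intro allI impI)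
    fix i j assume a: "matches h i j \<and> is_inv_on r (h!i)"
    then have "i < k" using lh unfolding matches_def by auto
    then show "i \<in> set L" using a hi cF unfolding L_def by auto
  qed
  have sL: "sorted_wrt (\<lambda>u w. u < ri w) L" unfolding L_def using sF by (simp add: sorted_wrt_filter)
  have c4: "\<forall>x < length L. \<forall>y < length L. (\<exists>j. matches h (L!x) j \<and> j < L!y) \<longrightarrow> x < y"
  proof (intro allI impI)
    fix x y assume x: "x < length L" and y: "y < length L" and "\<exists>j. matches h (L!x) j \<and> j < L!y"
    then obtain jj where jj: "matches h (L!x) jj" "jj < L!y" by blast
    have inF: "L!x \<in> set F" using x unfolding L_def by (metis nth_mem filter_is_subset subsetD)
    have "jj = ri (L!x)" using mF inF jj(1) unfolding h_def by blast
    show "x < y"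
    proof (rule ccontr)
      assume "\<not> x < y"
      then consider "y = x" | "y < x" by linarith
      then show False
      proof cases
        case 1
        then show ?thesis using jj \<open>jj = ri (L!x)\<close> rF inF by fastforce
      next
        case 2
        then have "L!y < ri (L!x)" using sL x unfolding sorted_wrt_iff_nth_less by blast
        then show ?thesis using jj \<open>jj = ri (L!x)\<close> by simp
      qed
    qed
  qed
  have c5: "\<forall>k' < length L. \<forall>y. matches h (L!k') y \<and> is_read_inv (h!(L!k')) \<longrightarrow>
         resp_val (h!y) = cur_val h v0 (take k' L)"
  proof (intro allI impI)
    fix k' y assume k': "k' < length L" and a: "matches h (L!k') y \<and> is_read_inv (h!(L!k'))"
    define aa where "aa = L!k'"
    have inF: "aa \<in> set F" using k' unfolding L_def aa_def by (metis nth_mem filter_is_subset subsetD)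
    have yr: "y = ri aa" using mF inF a unfolding h_def aa_def by blast
    have yk: "y < k" "aa < y" using a lh unfolding matches_def aa_def by auto
    obtain tt where tt: "tt < length F" "F!tt = aa" using inF by (metis in_set_conv_nth)
    define xs where "xs = take tt F"
    have xsr: "\<forall>b\<in>set xs. b < ri aa"
    proof
      fix b assume "b \<in> set xs"
      then obtain u where u: "u < tt" "b = F!u" unfolding xs_def using tt(1)
        by (auto simp: in_set_conv_nth)
      then show "b < ri aa" using sF tt unfolding sorted_wrt_iff_nth_less by auto
    qed
    then have xsk: "\<forall>b\<in>set xs. b < k" using yr yk by auto
    have Fs: "F = xs @ aa # drop (Suc tt) F" unfolding xs_def using tt id_take_nth_drop by metis
    have Ls: "L = xs @ aa # filter (\<lambda>i. i < k) (drop (Suc tt) F)"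
      unfolding L_def using xsk yk by (subst Fs) simp
    have lx: "length xs = tt" unfolding xs_def using tt by simp
    have "L ! tt = aa" using Ls lx by (simp add: nth_append)
    moreover have "tt < length L" using Ls lx by simp
    ultimately have "k' = tt" using c1 k' aa_def nth_eq_iff_index_eq by metis
    then have tk: "take k' L = xs" using Ls lx by simp
    have "is_read_inv (H (F!tt))" using a hi tt yk aa_def by auto
    then have "resp_val (H (ri aa)) = cv' H v0 xs" using vF tt unfolding xs_def by auto
    then show "resp_val (h!y) = cur_val h v0 (take k' L)"
      using tk cur_val_cv'[OF xsk] hi yk yr unfolding h_def by simp
  qed
  show ?thesis unfolding linearizable_reg_def h_def[symmetric]
    using c1 c2 c3 c4 c5 by blast
qed



definition ri_off :: "nat \<Rightarrow> nat \<Rightarrow> nat" where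
"ri_off m t = (if t = 0 then 8*m+6 else if t = 1 then m+2 else if t \<le> m+1 then m+6+7*(t-2) else t+1)"

definition riG :: "nat \<Rightarrow> nat \<Rightarrow> nat" where
"riG m k = (k div BB m) * BB m + ri_off m (k mod BB m)"

lemma resp_struct:
  assumes tB: "t < BB m" and e: "ev m j c t = Inv p r op"
  shows "ri_off m t < BB m \<and> t < ri_off m t \<and> (\<exists>v. ev m j c (ri_off m t) = Resp p r v) \<and>
     (\<forall>t'. t < t' \<and> t' < ri_off m t \<longrightarrow> sched m t' \<noteq> p)"
proof -
  have t1: "t < BB m" by fact
  consider (A) "t \<le> m+1" | (B) "m+2 \<le> t \<and> t \<le> m+5" | (C) "m+6 \<le> t \<and> t < 8*m+6" | (D) "8*m+6 \<le> t"
    by linarith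
  then show ?thesis
  proof cases
    case A
    then consider "t = 0" | "t = 1" | "2 \<le> t \<and> t \<le> m+1" by linarith
    then show ?thesis
    proof cases
      case 1
      then show ?thesis using e unfolding ri_off_def BB_def ev_def sched_def
        by (auto simp: ev5_def)
    next
      case 2
      then show ?thesis using e unfolding ri_off_def BB_def ev_def sched_def
        by auto
    next
      case 3
      have i: "t - 2 < m" using 3 by linarith
      have ev0: "ev m j c (ri_off m t) = Resp t (R1 j) (VI (cI c))"
      proof -
        have "ev m j c (ri_off m t) = ev5 j c (t-2+2) 0" using ev5'[of 0 "t-2" m j c] i 3 unfolding ri_off_def by simp
        moreover have "t-2+2 = t" using 3 by linarith
        ultimately show ?thesis unfolding ev5_def by simp
      qed
      have s: "\<forall>t'. t < t' \<and> t' < ri_off m t \<longrightarrow> sched m t' \<noteq> t"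
        using 3 unfolding ri_off_def sched_def by (auto; presburger)
      show ?thesis using e 3 ev0 s unfolding ri_off_def BB_def ev_def by auto
    qed
  next
    case B
    then show ?thesis using e tB unfolding ri_off_def BB_def ev_def sched_def by auto
  next
    case C
    define i where "i = (t-m-6) div 7"
    define s where "s = (t-m-6) mod 7"
    have ir: "t = m+6+7*i+s" "s < 7" "i < m" using C unfolding i_def s_def by auto
    have e5: "ev m j c t = ev5 j c (i+2) s" using ev5'[OF ir(2,3)] ir(1) by simp
    have s6: "s < 6" "s = 1 \<or> s = 3 \<or> s = 5" using e e5 unfolding ev5_def by (auto split: if_splits)
    have e5': "ev m j c (t+1) = ev5 j c (i+2) (s+1)" using ev5'[of "s+1" i m] ir s6 by simp
    show ?thesis using e e5 e5' ir s6 C unfolding ri_off_def BB_def ev5_def by auto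
  next
    case D
    then consider "t = 8*m+6" | "t = 8*m+7" | "t = 8*m+8" | "t = 8*m+9" | "t = 8*m+10"
      using tB unfolding BB_def by linarith
    then show ?thesis using e unfolding ri_off_def BB_def ev_def sched_def by (cases; auto)
  qed
qed

lemma matches_ri:
  assumes e: "Hc m cs a = Inv p r op" and mt: "matches (map (Hc m cs) [0..<k]) a y"
  shows "y = riG m a"
proof -
  define j where "j = a div BB m"
  define t where "t = a mod BB m"
  have B: "0 < BB m" by (rule BB_pos)
  have tB: "t < BB m" unfolding t_def using B by simp
  have ajt: "a = j * BB m + t" unfolding j_def t_def by simp
  have e': "ev m j (cs j) t = Inv p r op" using e unfolding Hc_def j_def t_def by simp
  note RS = resp_struct[OF tB e']
  have rg: "riG m a = j * BB m + ri_off m t" unfolding riG_def j_def t_def by simp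
  from mt have ay: "a < y" "y < k" and hy: "\<exists>v r'. map (Hc m cs) [0..<k] ! y = Resp p r' v"
    and nb: "\<forall>x. a < x \<and> x < y \<longrightarrow> proc (map (Hc m cs) [0..<k] ! x) \<noteq> p"
    using e unfolding matches_def by auto
  have py: "proc (Hc m cs y) = p" using hy ay by auto
  have pr: "proc (Hc m cs (riG m a)) = p"
    using RS rg Hc_at[of "ri_off m t" m cs j] by auto
  show ?thesis
  proof (rule ccontr)
    assume ne: "y \<noteq> riG m a"
    show False
    proof (cases "y < riG m a")
      case True
      define t' where "t' = y - j * BB m"
      have yt: "y = j * BB m + t'" "t < t'" "t' < ri_off m t" using True ay ajt rg unfolding t'_def by auto
      have "proc (Hc m cs y) = sched m t'" using yt RS Hc_at[of t' m cs j] proc_ev[of t' m] by auto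
      then show False using RS yt py by auto
    next
      case False
      then have "a < riG m a" "riG m a < y" using ne RS rg ajt by auto
      then show False using nb pr ay by auto
    qed
  qed
qed


lemma riG_at: "w < BB m \<Longrightarrow> riG m (j * BB m + w) = j * BB m + ri_off m w"
  unfolding riG_def by simp

lemma inv_is_Inv: "is_inv_on r e \<Longrightarrow> \<exists>p op. e = Inv p r op"
  by (cases e) auto

lemma cv'_shift:
  assumes "\<forall>t\<in>set xs. t < BB m"
  shows "cv' (Hc m cs) v0 (map (\<lambda>t. j * BB m + t) xs) = cv' (ev m j (cs j)) v0 xs"
  using assms unfolding cv'_def
proof (induction xs arbitrary: v0)
  case Nil
  then show ?case by simp
next
  case (Cons a xs)
  then show ?case by (simp add: Hc_at)
qed

lemma lin_offsets:
  assumes dF: "distinct Fo"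
    and bF: "\<forall>t\<in>set Fo. t < BB m \<and> is_inv_on r (ev m jr (cs jr) t)"
    and cF: "\<forall>j c t. t < BB m \<longrightarrow> is_inv_on r (ev m j c t) \<longrightarrow> j = jr \<and> t \<in> set Fo"
    and sF: "sorted_wrt (\<lambda>u w. u < ri_off m w) Fo"
    and rF: "\<forall>t\<in>set Fo. t < ri_off m t"
    and vF: "\<forall>tt<length Fo. is_read_inv (ev m jr (cs jr) (Fo!tt)) \<longrightarrow>
        resp_val (ev m jr (cs jr) (ri_off m (Fo!tt))) = cv' (ev m jr (cs jr)) v0 (take tt Fo)"
  shows "linearizable_reg (map (Hc m cs) [0..<k]) r v0"
proof -
  define b where "b = jr * BB m"
  define F where "F = map (\<lambda>t. b + t) Fo"
  have B: "0 < BB m" by (rule BB_pos)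
  show ?thesis
  proof (rule lin_generic[where F = F and ri = "riG m"])
    show "distinct F" unfolding F_def using dF by (simp add: distinct_map)
    show "\<forall>i\<in>set F. is_inv_on r (Hc m cs i)" unfolding F_def b_def using bF Hc_at by auto
    show "\<forall>i. is_inv_on r (Hc m cs i) \<longrightarrow> i \<in> set F"
    proof (intro allI impI)
      fix i assume a: "is_inv_on r (Hc m cs i)"
      have "i = (i div BB m) * BB m + i mod BB m" by simp
      moreover have "i mod BB m < BB m" using B by simp
      ultimately show "i \<in> set F" using a cF unfolding Hc_def F_def b_def
        by (metis (no_types, lifting) image_eqI set_map)
    qed
    show "sorted_wrt (\<lambda>u w. u < riG m w) F" unfolding F_def sorted_wrt_map
      by (rule sorted_wrt_mono_rel[OF _ sF]) (use bF riG_at b_def in auto)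
    show "\<forall>w\<in>set F. w < riG m w" unfolding F_def using rF bF riG_at b_def by auto
    show "\<forall>a y. a \<in> set F \<longrightarrow> matches (map (Hc m cs) [0..<k]) a y \<longrightarrow> y = riG m a"
    proof (intro allI impI)
      fix a y assume a: "a \<in> set F" and mt: "matches (map (Hc m cs) [0..<k]) a y"
      have "is_inv_on r (Hc m cs a)" using a bF Hc_at unfolding F_def b_def by auto
      then obtain p op where "Hc m cs a = Inv p r op" using inv_is_Inv by blast
      then show "y = riG m a" using matches_ri mt by blast
    qed
    show "\<forall>t<length F. is_read_inv (Hc m cs (F!t)) \<longrightarrow> resp_val (Hc m cs (riG m (F!t))) = cv' (Hc m cs) v0 (take t F)"
    proof (intro allI impI)
      fix t assume t: "t < length F" and rd: "is_read_inv (Hc m cs (F!t))"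
      have tl: "t < length Fo" using t unfolding F_def by simp
      have ft: "F!t = b + Fo!t" unfolding F_def using tl by simp
      have fb: "Fo!t < BB m" using bF tl nth_mem by blast
      have tk: "take t F = map (\<lambda>t. jr * BB m + t) (take t Fo)" unfolding F_def b_def by (simp add: take_map)
      have tb: "\<forall>x\<in>set (take t Fo). x < BB m" using bF by (meson in_set_takeD)
      have "is_read_inv (ev m jr (cs jr) (Fo!t))" using rd ft fb Hc_at unfolding b_def by metis
      then have "resp_val (ev m jr (cs jr) (ri_off m (Fo!t))) = cv' (ev m jr (cs jr)) v0 (take t Fo)"
        using vF tl by blast
      moreover have "riG m (F!t) = b + ri_off m (Fo!t)" using ft fb riG_at b_def by simp
      moreover have "ri_off m (Fo!t) < BB m"
        using resp_struct[OF fb] bF tl inv_is_Inv nth_mem by metis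
      ultimately show "resp_val (Hc m cs (riG m (F!t))) = cv' (Hc m cs) v0 (take t F)"
        using tk cv'_shift[OF tb] Hc_at b_def by simp
    qed
  qed
qed



lemma cv'_append: "cv' H v (xs @ ys) = cv' H (cv' H v xs) ys"
  unfolding cv'_def by simp

lemma cv'_reads: "\<forall>i\<in>set xs. is_read_inv (H i) \<Longrightarrow> cv' H v xs = v"
  unfolding cv'_def
proof (induction xs arbitrary: v)
  case Nil
  then show ?case by simp
next
  case (Cons a xs)
  then have "is_read_inv (H a)" by simp
  then have "(case H a of Inv p r (Wr w) \<Rightarrow> w | _ \<Rightarrow> v) = v"
    by (cases "H a" rule: is_read_inv.cases) auto
  then show ?case using Cons by simp
qed

lemma cv'_write: "H x = Inv p r (Wr w) \<Longrightarrow> cv' H v [x] = w"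
  unfolding cv'_def by simp

lemma ev_ph5:
  assumes "i < m"
  shows "ev m j c (m+6+7*i) = Resp (i+2) (R1 j) (VI (cI c))"
    "ev m j c (m+7+7*i) = Inv (i+2) (R1 j) Rd"
    "ev m j c (m+8+7*i) = Resp (i+2) (R1 j) (VI (1 - cI c))"
    "ev m j c (m+9+7*i) = Inv (i+2) (C1 j) Rd"
    "ev m j c (m+10+7*i) = Resp (i+2) (C1 j) (VI (cI c))"
    "ev m j c (m+11+7*i) = Inv (i+2) (R2 j) (Wr (VB True))"
    "ev m j c (m+12+7*i) = Resp (i+2) (R2 j) Bot"
  using ev5'[of 0 i m j c] ev5'[of 1 i m j c] ev5'[of 2 i m j c] ev5'[of 3 i m j c]
    ev5'[of 4 i m j c] ev5'[of 5 i m j c] ev5'[of 6 i m j c] assms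
  by (simp_all add: ev5_def algebra_simps)

lemma ri_ph5:
  assumes "i < m"
  shows "ri_off m (m+7+7*i) = m+8+7*i" "ri_off m (m+9+7*i) = m+10+7*i" "ri_off m (m+11+7*i) = m+12+7*i"
  unfolding ri_off_def by auto

lemma inv_char:
  assumes tB: "t < BB m" and iv: "is_inv_on r (ev m j c t)"
  shows "(r = R1 j \<and> (t \<le> m+1 \<or> (\<exists>i<m. t = m+7+7*i))) \<or>
         (r = C1 j \<and> (t = m+4 \<or> (\<exists>i<m. t = m+9+7*i))) \<or>
         (r = R2 j \<and> ((\<exists>i<m. t = m+11+7*i) \<or> t = 8*m+7 \<or> t = 8*m+9))"
proof (cases "m+6 \<le> t \<and> t < 8*m+6")
  case C: True
  define i where "i = (t-m-6) div 7"
  define s where "s = (t-m-6) mod 7"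
  have ir: "t = m+6+7*i+s" "s < 7" "i < m" using C unfolding i_def s_def by auto
  have e5: "ev m j c t = ev5 j c (i+2) s" using ev5'[OF ir(2,3)] ir(1) by simp
  have "s = 1 \<or> s = 3 \<or> s = 5" using iv e5 unfolding ev5_def by (auto split: if_splits)
  then show ?thesis using iv e5 ir unfolding ev5_def by (auto simp: add.assoc)
next
  case False
  then show ?thesis using iv tB unfolding ev_def BB_def by (auto split: if_splits)
qed


lemma lin_C1:
  assumes m1: "1 \<le> m"
  shows "linearizable_reg (map (Hc m cs) [0..<k]) (C1 j0) (VI (-1))"
proof -
  define c where "c = cs j0"
  define Rs where "Rs = map (\<lambda>i. m+9+7*i) [0..<m]"
  define Fo where "Fo = (m+4) # Rs"
  have e4: "ev m j0 c (m+4) = Inv 0 (C1 j0) (Wr (VI (cI c)))" unfolding ev_def by simp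
  have ri4: "ri_off m (m+4) = m+5" unfolding ri_off_def by simp
  show ?thesis
  proof (rule lin_offsets[where Fo = Fo and jr = j0])
    show "distinct Fo" unfolding Fo_def Rs_def by (auto simp: distinct_map inj_on_def)
    show "\<forall>t\<in>set Fo. t < BB m \<and> is_inv_on (C1 j0) (ev m j0 (cs j0) t)"
      unfolding Fo_def Rs_def using e4 ev_ph5 c_def by (auto simp: BB_def)
    show "\<forall>j c t. t < BB m \<longrightarrow> is_inv_on (C1 j0) (ev m j c t) \<longrightarrow> j = j0 \<and> t \<in> set Fo"
    proof (intro allI impI)
      fix j c' t assume "t < BB m" "is_inv_on (C1 j0) (ev m j c' t)"
      from inv_char[OF this] show "j = j0 \<and> t \<in> set Fo" unfolding Fo_def Rs_def by auto
    qed
    show "sorted_wrt (\<lambda>u w. u < ri_off m w) Fo"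
      unfolding Fo_def Rs_def
      by (auto simp: sorted_wrt_map ri_ph5 intro: sorted_wrt_mono_rel[OF _ sorted_wrt_upt])
    show "\<forall>t\<in>set Fo. t < ri_off m t" unfolding Fo_def Rs_def using ri4 ri_ph5 by auto
    show "\<forall>tt<length Fo. is_read_inv (ev m j0 (cs j0) (Fo!tt)) \<longrightarrow>
        resp_val (ev m j0 (cs j0) (ri_off m (Fo!tt))) = cv' (ev m j0 (cs j0)) (VI (-1)) (take tt Fo)"
    proof (intro allI impI)
      fix tt assume tt: "tt < length Fo" and rd: "is_read_inv (ev m j0 (cs j0) (Fo!tt))"
      have "tt \<noteq> 0"
      proof
        assume "tt = 0"
        then have "Fo!tt = m+4" unfolding Fo_def by simp
        then show False using rd e4 c_def by simp
      qed
      then obtain i where i: "tt = Suc i" by (cases tt) auto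
      have im: "i < m" using tt i unfolding Fo_def Rs_def by simp
      have ft: "Fo!tt = m+9+7*i" using i im unfolding Fo_def Rs_def by simp
      have tk: "take tt Fo = [m+4] @ take i Rs" using i unfolding Fo_def by simp
      have rds: "\<forall>x\<in>set (take i Rs). is_read_inv (ev m j0 c x)"
      proof
        fix x assume "x \<in> set (take i Rs)"
        then have "x \<in> set Rs" by (rule in_set_takeD)
        then obtain i' where "i' < m" "x = m+9+7*i'" unfolding Rs_def by auto
        then show "is_read_inv (ev m j0 c x)" using ev_ph5(4) by simp
      qed
      have "cv' (ev m j0 c) (VI (-1)) (take tt Fo) = VI (cI c)"
        unfolding tk cv'_append using cv'_write[where H="ev m j0 c", OF e4] cv'_reads[OF rds] by simp
      then show "resp_val (ev m j0 (cs j0) (ri_off m (Fo!tt))) = cv' (ev m j0 (cs j0)) (VI (-1)) (take tt Fo)"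
        using ft ri_ph5[OF im] ev_ph5[OF im] c_def by simp
    qed
  qed
qed


lemma cv'_writes: "\<forall>x\<in>set xs. \<exists>p r. H x = Inv p r (Wr w) \<Longrightarrow> xs \<noteq> [] \<Longrightarrow> cv' H v xs = w"
proof (induction xs arbitrary: v)
  case Nil
  then show ?case by simp
next
  case (Cons a xs)
  obtain p r where "H a = Inv p r (Wr w)" using Cons.prems by auto
  then have "cv' H v (a # xs) = cv' H w xs" unfolding cv'_def by simp
  then show ?case using Cons by (cases xs) (auto simp: cv'_def)
qed

lemma lin_R2:
  assumes m1: "1 \<le> m"
  shows "linearizable_reg (map (Hc m cs) [0..<k]) (R2 j0) (VB False)"
proof -
  define c where "c = cs j0"
  define Ws where "Ws = map (\<lambda>i. m+11+7*i) [0..<m]"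
  define Fo where "Fo = Ws @ [8*m+7, 8*m+9]"
  have e7: "ev m j0 c (8*m+7) = Inv 1 (R2 j0) Rd" unfolding ev_def by simp
  have e9: "ev m j0 c (8*m+9) = Inv 0 (R2 j0) Rd" unfolding ev_def by simp
  have e8: "ev m j0 c (8*m+8) = Resp 1 (R2 j0) (VB True)" unfolding ev_def by simp
  have e10: "ev m j0 c (8*m+10) = Resp 0 (R2 j0) (VB True)" unfolding ev_def by simp
  have r7: "ri_off m (8*m+7) = 8*m+8" "ri_off m (8*m+9) = 8*m+10" unfolding ri_off_def by auto
  have lw: "length Ws = m" unfolding Ws_def by simp
  have wsw: "\<forall>x\<in>set Ws. \<exists>p r. ev m j0 c x = Inv p r (Wr (VB True))"
    unfolding Ws_def using ev_ph5(6) by auto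
  have wsne: "Ws \<noteq> []" using m1 unfolding Ws_def by simp
  have cvW: "cv' (ev m j0 c) (VB False) Ws = VB True" using cv'_writes[OF wsw wsne] .
  show ?thesis
  proof (rule lin_offsets[where Fo = Fo and jr = j0])
    show "distinct Fo" unfolding Fo_def Ws_def apply (auto simp: distinct_map inj_on_def) by presburger+
    show "\<forall>t\<in>set Fo. t < BB m \<and> is_inv_on (R2 j0) (ev m j0 (cs j0) t)"
      unfolding Fo_def Ws_def using e7 e9 ev_ph5 c_def by (auto simp: BB_def)
    show "\<forall>j c t. t < BB m \<longrightarrow> is_inv_on (R2 j0) (ev m j c t) \<longrightarrow> j = j0 \<and> t \<in> set Fo"
    proof (intro allI impI)
      fix j c' t assume "t < BB m" "is_inv_on (R2 j0) (ev m j c' t)"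
      from inv_char[OF this] show "j = j0 \<and> t \<in> set Fo" unfolding Fo_def Ws_def by auto
    qed
    show "sorted_wrt (\<lambda>u w. u < ri_off m w) Fo"
      unfolding Fo_def Ws_def using r7
      by (auto simp: sorted_wrt_append sorted_wrt_map ri_ph5 intro: sorted_wrt_mono_rel[OF _ sorted_wrt_upt])
    show "\<forall>t\<in>set Fo. t < ri_off m t" unfolding Fo_def Ws_def using r7 ri_ph5 by auto
    show "\<forall>tt<length Fo. is_read_inv (ev m j0 (cs j0) (Fo!tt)) \<longrightarrow>
        resp_val (ev m j0 (cs j0) (ri_off m (Fo!tt))) = cv' (ev m j0 (cs j0)) (VB False) (take tt Fo)"
    proof (intro allI impI)
      fix tt assume tt: "tt < length Fo" and rd: "is_read_inv (ev m j0 (cs j0) (Fo!tt))"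
      have "\<not> tt < m"
      proof
        assume "tt < m"
        then have "Fo!tt \<in> set Ws" unfolding Fo_def using lw by (simp add: nth_append)
        then show False using rd wsw c_def by auto
      qed
      moreover have "tt < m+2" using tt lw unfolding Fo_def by simp
      ultimately consider "tt = m" | "tt = m+1" by linarith
      then show "resp_val (ev m j0 (cs j0) (ri_off m (Fo!tt))) = cv' (ev m j0 (cs j0)) (VB False) (take tt Fo)"
      proof cases
        case 1
        then show ?thesis using lw cvW e8 r7 c_def unfolding Fo_def by (simp add: nth_append)
      next
        case 2
        have "take tt Fo = Ws @ [8*m+7]" using 2 lw unfolding Fo_def by simp
        moreover have "cv' (ev m j0 c) (VB False) (Ws @ [8*m+7]) = VB True"
          unfolding cv'_append using cvW cv'_reads[of "[8*m+7]" "ev m j0 c"] e7 by simp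
        ultimately show ?thesis using 2 lw e10 r7 c_def unfolding Fo_def by (simp add: nth_append)
      qed
    qed
  qed
qed


lemma lin_R1:
  assumes m1: "1 \<le> m"
  shows "linearizable_reg (map (Hc m cs) [0..<k]) (R1 j0) Bot"
proof -
  define c where "c = cs j0"
  define wc where "wc = (if c then 0 else 1::nat)"
  define wn where "wn = (if c then 1 else 0::nat)"
  define A where "A = [2..<m+2]"
  define C where "C = map (\<lambda>i. m+7+7*i) [0..<m]"
  define Fo where "Fo = wc # A @ wn # C"
  have ewc: "\<exists>p. ev m j0 c wc = Inv p (R1 j0) (Wr (VI (cI c)))"
    unfolding wc_def ev_def cI_def by auto
  have ewn: "\<exists>p. ev m j0 c wn = Inv p (R1 j0) (Wr (VI (1 - cI c)))"
    unfolding wn_def ev_def cI_def by auto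
  have wcn: "wc \<le> 1" "wn \<le> 1" "wc \<noteq> wn" unfolding wc_def wn_def by auto
  have riw: "m+2 \<le> ri_off m wc" "m+2 \<le> ri_off m wn" unfolding wc_def wn_def ri_off_def by auto
  have eA: "t \<in> set A \<Longrightarrow> ev m j0 c t = Inv t (R1 j0) Rd" for t unfolding A_def ev_def by auto
  have rA: "t \<in> set A \<Longrightarrow> ri_off m t = m+6+7*(t-2)" for t unfolding A_def ri_off_def by auto
  have eAr: "t \<in> set A \<Longrightarrow> ev m j0 c (ri_off m t) = Resp t (R1 j0) (VI (cI c))" for t
  proof -
    assume t: "t \<in> set A"
    have tt: "2 \<le> t" "t \<le> m+1" using t unfolding A_def by auto
    have i: "t-2 < m" "t-2+2 = t" using tt by linarith+
    show ?thesis using ev_ph5(1)[OF i(1), of j0 c] rA[OF t] i(2) by simp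
  qed
  have lA: "length A = m" unfolding A_def length_upt by simp
  have lC: "length C = m" unfolding C_def by simp
  have rdA: "\<forall>x\<in>set xs. is_read_inv (ev m j0 c x)" if "set xs \<subseteq> set A" for xs
    using that eA by auto
  have rdC: "\<forall>x\<in>set xs. is_read_inv (ev m j0 c x)" if "set xs \<subseteq> set C" for xs
    using that ev_ph5(2) unfolding C_def by auto
  have cvc: "cv' (ev m j0 c) Bot [wc] = VI (cI c)" using ewc cv'_write by metis
  have cvn: "cv' (ev m j0 c) v [wn] = VI (1 - cI c)" for v using ewn cv'_write by metis
  show ?thesis
  proof (rule lin_offsets[where Fo = Fo and jr = j0])
    show "distinct Fo" unfolding Fo_def A_def C_def using wcn
      by (auto simp: distinct_map inj_on_def)
    show "\<forall>t\<in>set Fo. t < BB m \<and> is_inv_on (R1 j0) (ev m j0 (cs j0) t)"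
      unfolding Fo_def using ewc ewn eA ev_ph5(2) c_def wcn
      by (auto simp: BB_def A_def C_def)
    show "\<forall>j c t. t < BB m \<longrightarrow> is_inv_on (R1 j0) (ev m j c t) \<longrightarrow> j = j0 \<and> t \<in> set Fo"
    proof (intro allI impI)
      fix j c' t assume "t < BB m" "is_inv_on (R1 j0) (ev m j c' t)"
      from inv_char[OF this] show "j = j0 \<and> t \<in> set Fo" unfolding Fo_def A_def C_def wc_def wn_def
        by auto
    qed
    show "sorted_wrt (\<lambda>u w. u < ri_off m w) Fo"
    proof -
      have s1: "\<forall>w\<in>set (A @ wn # C). wc < ri_off m w" using riw wcn rA ri_ph5(1) unfolding C_def by auto
      have s2: "sorted_wrt (\<lambda>u w. u < ri_off m w) A" 
        unfolding A_def by (rule sorted_wrt_mono_rel[OF _ sorted_wrt_upt]) (auto simp: ri_off_def)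
      have s3: "sorted_wrt (\<lambda>u w. u < ri_off m w) C" unfolding C_def
        by (auto simp: sorted_wrt_map ri_ph5 intro: sorted_wrt_mono_rel[OF _ sorted_wrt_upt])
      have s4: "\<forall>u\<in>set A. \<forall>w\<in>set (wn # C). u < ri_off m w" using riw ri_ph5(1) unfolding A_def C_def by auto
      have s5: "\<forall>w\<in>set C. wn < ri_off m w" using ri_ph5(1) wcn unfolding C_def by auto
      show ?thesis unfolding Fo_def using s1 s2 s3 s4 s5 by (simp add: sorted_wrt_append)
    qed
    show "\<forall>t\<in>set Fo. t < ri_off m t" unfolding Fo_def using riw wcn rA ri_ph5(1) unfolding C_def A_def
      by auto
    show "\<forall>tt<length Fo. is_read_inv (ev m j0 (cs j0) (Fo!tt)) \<longrightarrow>
        resp_val (ev m j0 (cs j0) (ri_off m (Fo!tt))) = cv' (ev m j0 (cs j0)) Bot (take tt Fo)"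
    proof (intro allI impI)
      fix tt assume tt: "tt < length Fo" and rd: "is_read_inv (ev m j0 (cs j0) (Fo!tt))"
      have tl: "tt < 2*m+2" using tt lA lC unfolding Fo_def by simp
      have n0: "tt \<noteq> 0"
      proof
        assume "tt = 0"
        then have "Fo!tt = wc" unfolding Fo_def by simp
        then show False using rd ewc c_def by auto
      qed
      have n1: "tt \<noteq> m+1"
      proof
        assume "tt = m+1"
        then have "Fo!tt = wn" unfolding Fo_def using lA by (simp add: nth_append)
        then show False using rd ewn c_def by auto
      qed
      consider (a) "1 \<le> tt \<and> tt \<le> m" | (b) "m+2 \<le> tt \<and> tt < 2*m+2" using n0 n1 tl by linarith
      then show "resp_val (ev m j0 (cs j0) (ri_off m (Fo!tt))) = cv' (ev m j0 (cs j0)) Bot (take tt Fo)"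
      proof cases
        case a
        define u where "u = tt - 1"
        have u: "tt = Suc u" "u < m" using a unfolding u_def by auto
        have ft: "Fo!tt = A!u" unfolding Fo_def using u lA by (simp add: nth_append)
        have fA: "A!u \<in> set A" using u lA by simp
        have tk: "take tt Fo = [wc] @ take u A" unfolding Fo_def using u lA by simp
        have "cv' (ev m j0 c) Bot (take tt Fo) = VI (cI c)"
          unfolding tk cv'_append cvc using cv'_reads[OF rdA[of "take u A"]] by (simp add: set_take_subset)
        then show ?thesis using ft eAr[OF fA] c_def by simp
      next
        case b
        define i where "i = tt - (m+2)"
        have i: "tt = m+2+i" "i < m" using b unfolding i_def by auto
        have ft: "Fo!tt = m+7+7*i" unfolding Fo_def C_def using i lA by (simp add: nth_append)
        have tk: "take tt Fo = ([wc] @ A) @ [wn] @ take i C" unfolding Fo_def using i lA by simp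
        have "cv' (ev m j0 c) Bot (take tt Fo) = VI (1 - cI c)"
          unfolding tk cv'_append cvn using cv'_reads[OF rdC[of "take i C"]] by (simp add: set_take_subset)
        then show ?thesis using ft ri_ph5(1)[OF i(2)] ev_ph5(3)[OF i(2)] c_def by simp
      qed
    qed
  qed
qed


lemma sched_lt: "t < BB m \<Longrightarrow> sched m t < m+2"
  unfolding sched_def BB_def by (auto; presburger?)

theorem theorem1:
  fixes n :: nat
  assumes "n \<ge> 3"
  shows "\<exists>\<sigma> :: adversary. (\<forall>h. fst (\<sigma> h) < n) \<and>
    (\<forall>cs :: nat \<Rightarrow> bool.
       (\<forall>k r. linearizable_reg (snd (run \<sigma> cs k)) r (init_val r)) \<and>
       (\<forall>p < n. \<forall>j. \<exists>k. j \<le> rnd (fst (run \<sigma> cs k) p)))"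
proof -
  define m where "m = n - 2"
  have m1: "1 \<le> m" and nm: "n = m+2" using assms unfolding m_def by auto
  have B: "0 < BB m" by (rule BB_pos)
  show ?thesis
  proof (intro exI[of _ "adv m"] conjI allI impI)
    fix h :: "event list"
    show "fst (adv m h) < n" unfolding adv_def nm using sched_lt B by simp
  next
    fix cs :: "nat \<Rightarrow> bool" and k r
    have "snd (run (adv m) cs k) = map (Hc m cs) [0..<k]" using run_inv[OF m1] by blast
    then show "linearizable_reg (snd (run (adv m) cs k)) r (init_val r)"
      using lin_R1[OF m1] lin_C1[OF m1] lin_R2[OF m1] by (cases r) auto
  next
    fix cs :: "nat \<Rightarrow> bool" and p j assume p: "p < n"
    have "Pinv m cs ((j * BB m) div BB m) ((j * BB m) mod BB m) p (fst (run (adv m) cs (j * BB m)) p)"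
      using run_inv[OF m1, of cs "j * BB m"] p nm by auto
    then have "rnd (fst (run (adv m) cs (j * BB m)) p) = RN m j p 0" using B unfolding Pinv_def by simp
    then show "\<exists>k. j \<le> rnd (fst (run (adv m) cs k) p)" unfolding RN_def by (intro exI[of _ "j * BB m"]) auto
  qed
qed

end
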